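(* Let $f:\{-1,1\}^n\to\{-1,1\}$ be computable by a parity decision tree of depth $d$. Then $$\sum_{i=1}^n\hat f(i)\le\sqrt{2d}.$$
   Context: $\hat f(i)=\mathbf{E}_x[f(x)x_i]$ over uniform $x\in\{-1,1\}^n$. A parity decision tree is a rooted full binary tree whose internal nodes are labelled by subsets $S\subseteq[n]$, whose two outgoing edges are labelled $-1$ and $1$, and whose leaves are labelled by values in $\{-1,1\}$; an input $x$ follows from a node labelled $S$ the edge labelled $\prod_{i\in S}x_i$. It computes $f$ if every input $x$ reaches a leaf labelled $f(x)$; its depth is the maximum number of internal nodes on a root-to-leaf path. *)

theory Defs
  imports "HOL-Analysis.Analysis"
begin

text \<open>The Boolean cube {-1,1}^n, with coordinates indexed by 0..n-1; coordinates
  outside {..<n} are fixed to 1 so the cube is a finite set of 2^n points.\<close>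
definition cube :: "nat \<Rightarrow> (nat \<Rightarrow> int) set" where
  "cube n = {x. (\<forall>i<n. x i \<in> {-1, 1}) \<and> (\<forall>i\<ge>n. x i = 1)}"

definition fourier1 :: "nat \<Rightarrow> ((nat \<Rightarrow> int) \<Rightarrow> int) \<Rightarrow> nat \<Rightarrow> real" where
  "fourier1 n f i = (\<Sum>x\<in>cube n. real_of_int (f x * x i)) / 2 ^ n"

datatype pdt = PLeaf int | PNode "nat set" pdt pdt

fun pdt_eval :: "pdt \<Rightarrow> (nat \<Rightarrow> int) \<Rightarrow> int" where
  "pdt_eval (PLeaf b) x = b"
| "pdt_eval (PNode S tm tp) x =
     (if (\<Prod>i\<in>S. x i) = -1 then pdt_eval tm x else pdt_eval tp x)"

fun pdt_depth :: "pdt \<Rightarrow> nat" where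
  "pdt_depth (PLeaf b) = 0"
| "pdt_depth (PNode S tm tp) = Suc (max (pdt_depth tm) (pdt_depth tp))"

fun pdt_wf :: "nat \<Rightarrow> pdt \<Rightarrow> bool" where
  "pdt_wf n (PLeaf b) = (b \<in> {-1, 1})"
| "pdt_wf n (PNode S tm tp) = (S \<subseteq> {..<n} \<and> pdt_wf n tm \<and> pdt_wf n tp)"

definition pdt_computes :: "nat \<Rightarrow> pdt \<Rightarrow> ((nat \<Rightarrow> int) \<Rightarrow> int) \<Rightarrow> bool" where
  "pdt_computes n T f = (\<forall>x\<in>cube n. pdt_eval T x = f x)"

end

theory Submission
  imports Defs
begin


definition tp :: "(nat \<Rightarrow> int) \<Rightarrow> (nat \<Rightarrow> int) \<Rightarrow> (nat \<Rightarrow> int) \<Rightarrow> nat \<Rightarrow> int" where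
  "tp x y z = (\<lambda>i. x i * y i * z i)"

definition tclosed :: "(nat \<Rightarrow> int) set \<Rightarrow> bool" where
  "tclosed A = (\<forall>x\<in>A. \<forall>y\<in>A. \<forall>z\<in>A. tp x y z \<in> A)"

definition Lf :: "nat \<Rightarrow> (nat \<Rightarrow> int) \<Rightarrow> real" where
  "Lf n x = (\<Sum>i<n. real_of_int (x i))"

lemma cube_val: "x \<in> cube n \<Longrightarrow> x i = 1 \<or> x i = -1"
  unfolding cube_def by (cases "i < n") auto

lemma cube_sq: "x \<in> cube n \<Longrightarrow> x i * x i = 1"
  using cube_val[of x n i] by auto

lemma pm_mult: "(a::int) = 1 \<or> a = -1 \<Longrightarrow> b = 1 \<or> b = -1 \<Longrightarrow> a * b = 1 \<or> a * b = -1"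
  by auto

lemma cube_tclosed: "tclosed (cube n)"
proof -
  have "tp x y z \<in> cube n" if "x \<in> cube n" "y \<in> cube n" "z \<in> cube n" for x y z
  proof -
    have "x i * y i * z i = 1 \<or> x i * y i * z i = -1" for i
      by (rule pm_mult[OF pm_mult]) (use cube_val that in blast)+
    moreover have "x i * y i * z i = 1" if "i \<ge> n" for i
      using \<open>x \<in> cube n\<close> \<open>y \<in> cube n\<close> \<open>z \<in> cube n\<close> that by (simp add: cube_def)
    ultimately show ?thesis by (auto simp: cube_def tp_def)
  qed
  then show ?thesis by (auto simp: tclosed_def)
qed

lemma balanced:
  fixes g :: "(nat \<Rightarrow> int) \<Rightarrow> real"
  assumes fin: "finite A" and sub: "A \<subseteq> cube n" and tc: "tclosed A"
    and mult: "\<And>x y z. x\<in>A \<Longrightarrow> y\<in>A \<Longrightarrow> z\<in>A \<Longrightarrow> g (tp x y z) = g x * g y * g z"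
    and pm: "\<And>x. x\<in>A \<Longrightarrow> g x = 1 \<or> g x = -1"
    and y: "y\<in>A" and z: "z\<in>A" and ne: "g y \<noteq> g z"
  shows "(\<Sum>x\<in>A. g x) = 0"
proof -
  define \<phi> where "\<phi> x = tp x y z" for x
  have inv: "\<phi> (\<phi> x) = x" for x
  proof
    fix i
    have "y i * y i = 1" "z i * z i = 1" using cube_sq sub y z by blast+
    then show "\<phi> (\<phi> x) i = x i" unfolding \<phi>_def tp_def
      by (metis mult.commute mult.left_commute mult_1_right)
  qed
  have into: "\<phi> x \<in> A" if "x\<in>A" for x using tc that y z by (simp add: tclosed_def \<phi>_def)
  have bij: "bij_betw \<phi> A A"
    by (rule bij_betw_byWitness[where f'=\<phi>]) (auto simp: into inv)
  have gyz: "g y * g z = -1" using pm[OF y] pm[OF z] ne by auto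
  have "(\<Sum>x\<in>A. g x) = (\<Sum>x\<in>A. g (\<phi> x))" using sum.reindex_bij_betw[OF bij, of g] by simp
  also have "\<dots> = (\<Sum>x\<in>A. - g x)"
  proof (rule sum.cong)
    fix x assume "x \<in> A"
    then have "g (\<phi> x) = g x * (g y * g z)" using mult y z by (simp add: \<phi>_def mult.assoc)
    then show "g (\<phi> x) = - g x" using gyz by simp
  qed simp
  also have "\<dots> = - (\<Sum>x\<in>A. g x)" by (simp add: sum_negf)
  finally show ?thesis by simp
qed

lemma oddsum:
  fixes c :: "nat \<Rightarrow> int"
  assumes "finite K" "\<forall>i\<in>K. c i = 1 \<or> c i = -1"
  shows "even (sum c K + int (card K))"
  using assms
proof (induction K rule: finite_induct)
  case (insert k K)
  have "sum c (insert k K) + int (card (insert k K)) = (c k + 1) + (sum c K + int (card K))"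
    using insert by simp
  moreover have "even (c k + 1)" using insert by auto
  ultimately show ?case using insert by simp
qed simp

lemma oddsum2:
  fixes c :: "nat \<Rightarrow> int"
  assumes "finite K" "\<forall>i\<in>K. c i = 1 \<or> c i = -1" "odd (card K)"
  shows "1 \<le> \<bar>sum c K\<bar>"
proof -
  have "even (sum c K + int (card K))" using oddsum assms by blast
  then have "odd (sum c K)" using assms(3) by simp
  then have "sum c K \<noteq> 0" by auto
  then show ?thesis by linarith
qed



lemma structure_lemma:
  fixes rel :: "nat \<Rightarrow> nat \<Rightarrow> bool"
  assumes "finite X"
    and refl: "\<And>i. rel i i"
    and sym: "\<And>i j. rel i j \<Longrightarrow> rel j i"
    and trans: "\<And>i j k. rel i j \<Longrightarrow> rel j k \<Longrightarrow> rel i k"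
  shows "\<exists>R Z. R \<subseteq> X \<and> Z \<subseteq> X \<and> R \<inter> Z = {} \<and> card X = card R + 2 * card Z \<and>
     (\<forall>r\<in>R. odd (card {i\<in>X. rel i r})) \<and> (\<forall>r\<in>R. \<forall>s\<in>R. r \<noteq> s \<longrightarrow> \<not> rel r s) \<and>
     (\<forall>z\<in>Z. \<exists>w\<in>X. w \<notin> Z \<and> w \<noteq> z \<and> rel z w)"
  using assms(1)
proof (induction X rule: finite_psubset_induct)
  case (psubset X)
  show ?case
  proof (cases "\<exists>i\<in>X. \<exists>j\<in>X. i \<noteq> j \<and> rel i j")
    case False
    have "{i\<in>X. rel i r} = {r}" if "r \<in> X" for r
      using False that refl sym by blast
    then show ?thesis using False
      by (intro exI[of _ X] exI[of _ "{}"]) auto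
  next
    case True
    then obtain i j where ij: "i\<in>X" "j\<in>X" "i\<noteq>j" "rel i j" by blast
    define X' where "X' = X - {i,j}"
    have "X' \<subset> X" using ij by (auto simp: X'_def)
    from psubset.IH[OF this] obtain R Z where RZ: "R \<subseteq> X'" "Z \<subseteq> X'" "R \<inter> Z = {}"
      "card X' = card R + 2 * card Z"
      "\<forall>r\<in>R. odd (card {k\<in>X'. rel k r})" "\<forall>r\<in>R. \<forall>s\<in>R. r \<noteq> s \<longrightarrow> \<not> rel r s"
      "\<forall>z\<in>Z. \<exists>w\<in>X'. w \<notin> Z \<and> w \<noteq> z \<and> rel z w" by blast
    have finX': "finite X'" using psubset.hyps by (simp add: X'_def)
    have cX: "card X = card X' + 2"
    proof -
      have "X = insert i (insert j X')" using ij by (auto simp: X'_def)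
      moreover have "i \<notin> X'" "j \<notin> X'" by (auto simp: X'_def)
      ultimately show ?thesis using finX' ij by simp
    qed
    have iZ: "i \<notin> Z" "j \<notin> Z" "i \<notin> R" "j \<notin> R" using RZ by (auto simp: X'_def)
    have cZ: "card (insert i Z) = card Z + 1"
      using iZ finite_subset[OF RZ(2) finX'] by simp
    have odd: "odd (card {k\<in>X. rel k r})" if "r \<in> R" for r
    proof (cases "rel i r")
      case True
      then have "rel j r" using ij sym trans by blast
      then have "{k\<in>X. rel k r} = insert i (insert j {k\<in>X'. rel k r})"
        using True ij by (auto simp: X'_def)
      then show ?thesis using RZ(5) that finX' ij by (simp add: X'_def)
    next
      case False
      then have "\<not> rel j r" using ij sym trans by blast
      then have "{k\<in>X. rel k r} = {k\<in>X'. rel k r}"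
        using False ij by (auto simp: X'_def)
      then show ?thesis using RZ(5) that by simp
    qed
    have c1: "R \<subseteq> X" "insert i Z \<subseteq> X" using RZ ij by (auto simp: X'_def)
    have c2: "R \<inter> insert i Z = {}" using RZ iZ by auto
    have c3: "card X = card R + 2 * card (insert i Z)" using cX cZ RZ(4) by simp
    have c4: "\<forall>z\<in>insert i Z. \<exists>w\<in>X. w \<notin> insert i Z \<and> w \<noteq> z \<and> rel z w"
    proof
      fix z assume z: "z \<in> insert i Z"
      show "\<exists>w\<in>X. w \<notin> insert i Z \<and> w \<noteq> z \<and> rel z w"
      proof (cases "z = i")
        case True
        then show ?thesis using ij iZ by (intro bexI[of _ j]) auto
      next
        case False
        then have "z \<in> Z" using z by simp
        then obtain w where "w\<in>X'" "w \<notin> Z" "w \<noteq> z" "rel z w" using RZ(7) by blast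
        then show ?thesis by (intro bexI[of _ w]) (auto simp: X'_def)
      qed
    qed
    show ?thesis
      apply (rule exI[of _ R], rule exI[of _ "insert i Z"])
      apply (intro conjI)
      using c1 c2 c3 c4 odd RZ(6) by auto
  qed
qed

lemma cube_bij: "bij_betw (\<lambda>x. {i. x i = -1}) (cube n) (Pow {..<n})"
proof (rule bij_betw_byWitness[where f'="\<lambda>U i. if i \<in> U then -1 else 1"])
  show "\<forall>x\<in>cube n. (\<lambda>i. if i \<in> {i. x i = -1} then -1 else 1) = x"
  proof
    fix x assume x: "x \<in> cube n"
    show "(\<lambda>i. if i \<in> {i. x i = -1} then -1 else 1) = x"
    proof
      fix i show "(if i \<in> {i. x i = -1} then -1 else 1) = x i" using cube_val[OF x, of i] by auto
    qed
  qed
  show "\<forall>U\<in>Pow {..<n}. {i. (if i \<in> U then -1 else 1::int) = -1} = U" by auto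
  show "(\<lambda>x. {i. x i = -1}) ` cube n \<subseteq> Pow {..<n}"
    by (auto simp: cube_def) (metis leI one_neq_neg_one)
  show "(\<lambda>U i. if i \<in> U then -1 else 1) ` Pow {..<n} \<subseteq> cube n"
    by (auto simp: cube_def split: if_splits)
qed

lemma card_cube: "card (cube n) = 2 ^ n"
  using bij_betw_same_card[OF cube_bij[of n]] by (simp add: card_Pow)

lemma finite_cube: "finite (cube n)"
  using bij_betw_finite[OF cube_bij[of n]] by simp

lemma prod_pm: "finite U \<Longrightarrow> (\<forall>i\<in>U. x i = (1::int) \<or> x i = -1) \<Longrightarrow> prod x U = 1 \<or> prod x U = -1"
  by (induction U rule: finite_induct) auto

lemma chi_pm: "x \<in> cube n \<Longrightarrow> (\<Prod>i\<in>U. x i) = 1 \<or> (\<Prod>i\<in>U. x i) = -1"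
proof (cases "finite U")
  case True
  assume x: "x \<in> cube n"
  show ?thesis by (rule prod_pm[OF True]) (use cube_val[OF x] in blast)
qed simp

lemma counting:
  assumes fin: "finite A" and sub: "A \<subseteq> cube n" and Zs: "Z \<subseteq> {..<n}"
    and U: "\<And>z. z\<in>Z \<Longrightarrow> \<exists>U. finite U \<and> U \<inter> Z = {z} \<and> (\<forall>x\<in>A. \<forall>y\<in>A. (\<Prod>i\<in>U. x i) = (\<Prod>i\<in>U. y i))"
  shows "2 ^ card Z * card A \<le> 2 ^ n"
proof -
  have finZ: "finite Z" using Zs finite_subset by blast
  define \<Phi> where "\<Phi> p = (\<lambda>i. if i \<in> fst p then - snd p i else snd p i)" for p :: "nat set \<times> (nat \<Rightarrow> int)"
  have inj: "inj_on \<Phi> (Pow Z \<times> A)"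
  proof (rule inj_onI)
    fix p q assume p: "p \<in> Pow Z \<times> A" and q: "q \<in> Pow Z \<times> A" and eq: "\<Phi> p = \<Phi> q"
    obtain G x where pG: "p = (G, x)" by (cases p)
    obtain G' x' where qG: "q = (G', x')" by (cases q)
    have G: "G \<subseteq> Z" "G' \<subseteq> Z" "x \<in> A" "x' \<in> A" using p q pG qG by auto
    have eqi: "(if i \<in> G then - x i else x i) = (if i \<in> G' then - x' i else x' i)" for i
      using fun_cong[OF eq, of i] unfolding \<Phi>_def pG qG fst_conv snd_conv .
    have x'i: "x' i = (if i \<in> G \<longleftrightarrow> i \<in> G' then x i else - x i)" for i
      using eqi[of i] by (cases "i \<in> G"; cases "i \<in> G'"; simp; linarith)
    have GG: "G = G'"
    proof (rule ccontr)
      assume "G \<noteq> G'"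
      then obtain z where z: "z \<in> Z" "\<not> (z \<in> G \<longleftrightarrow> z \<in> G')" using G by blast
      obtain V where V: "finite V" "V \<inter> Z = {z}" "\<forall>x\<in>A. \<forall>y\<in>A. (\<Prod>i\<in>V. x i) = (\<Prod>i\<in>V. y i)"
        using U[OF z(1)] by blast
      have zV: "z \<in> V" using V(2) by auto
      have "(\<Prod>i\<in>V. x' i) = (\<Prod>i\<in>V. if i = z then - x i else x i)"
      proof (rule prod.cong)
        fix i assume "i \<in> V"
        then have "i \<noteq> z \<Longrightarrow> i \<notin> Z" using V(2) by auto
        then show "x' i = (if i = z then - x i else x i)" using x'i[of i] z G by auto
      qed simp
      also have "\<dots> = (- x z) * (\<Prod>i\<in>V - {z}. x i)"
        using prod.remove[OF V(1) zV, of "\<lambda>i. if i = z then - x i else x i"] by simp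
      also have "\<dots> = - (\<Prod>i\<in>V. x i)"
        using prod.remove[OF V(1) zV, of x] by simp
      finally have "(\<Prod>i\<in>V. x i) = - (\<Prod>i\<in>V. x i)" using V(3) G by metis
      moreover have "(\<Prod>i\<in>V. x i) \<noteq> 0" using chi_pm[of x n V] G sub by auto
      ultimately show False by simp
    qed
    have "x = x'" using x'i GG by auto
    then show "p = q" using pG qG GG by simp
  qed
  have img: "\<Phi> ` (Pow Z \<times> A) \<subseteq> cube n"
  proof
    fix y assume "y \<in> \<Phi> ` (Pow Z \<times> A)"
    then obtain G x where Gx: "G \<subseteq> Z" "x \<in> A" "y = \<Phi> (G, x)" by auto
    have xc: "x \<in> cube n" using Gx sub by auto
    show "y \<in> cube n" unfolding cube_def
    proof (intro CollectI conjI allI impI)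
      fix i assume "i < n" then show "y i \<in> {-1, 1}" using cube_val[OF xc, of i] Gx by (auto simp: \<Phi>_def)
    next
      fix i assume "n \<le> i" then show "y i = 1" using xc Gx Zs by (auto simp: \<Phi>_def cube_def)
    qed
  qed
  have "card (Pow Z \<times> A) \<le> card (cube n)"
    using card_inj_on_le[OF inj img finite_cube] .
  then show ?thesis by (simp add: card_cartesian_product card_Pow finZ card_cube)
qed



lemma key:
  assumes fin: "finite A" and ne: "A \<noteq> {}" and sub: "A \<subseteq> cube n" and tc: "tclosed A"
    and sz: "2^n \<le> card A * 2^m"
  shows "(\<Sum>x\<in>A. Lf n x)^2 \<le> real (card A) * (\<Sum>x\<in>A. (Lf n x)^2) - (real (card A))^2 * (real n - 2 * real m)"
proof -
  define a where "a = real (card A)"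
  have apos: "a > 0" using fin ne by (simp add: a_def card_gt_0_iff)
  define rel where "rel i j \<longleftrightarrow> (\<forall>x\<in>A. \<forall>y\<in>A. x i * x j = y i * y j)" for i j
  define D where "D = {i. i < n \<and> (\<forall>x\<in>A. \<forall>y\<in>A. x i = y i)}"
  define X where "X = {..<n} - D"
  have sq: "x i * x i = 1" if "x \<in> A" for x i using cube_sq sub that by blast
  have relR: "rel i i" for i using sq by (simp add: rel_def)
  have relS: "rel i j \<Longrightarrow> rel j i" for i j unfolding rel_def by (metis mult.commute)
  have relT: "rel i k" if "rel i j" "rel j k" for i j k
  proof -
    have "x i * x k = y i * y k" if xy: "x\<in>A" "y\<in>A" for x y
    proof -
      have e: "(z i * z j) * (z j * z k) = z i * z k" if "z \<in> A" for z
      proof -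
        have "(z i * z j) * (z j * z k) = z i * z k * (z j * z j)" by (simp add: algebra_simps)
        then show ?thesis using sq[OF that, of j] by simp
      qed
      have "x i * x j = y i * y j" "x j * x k = y j * y k"
        using \<open>rel i j\<close> \<open>rel j k\<close> xy unfolding rel_def by blast+
      then have "(x i * x j) * (x j * x k) = (y i * y j) * (y j * y k)" by simp
      then show ?thesis using e xy by simp
    qed
    then show ?thesis unfolding rel_def by blast
  qed
  have finX: "finite X" by (simp add: X_def)
  obtain R Z where RZ: "R \<subseteq> X" "Z \<subseteq> X" "R \<inter> Z = {}" "card X = card R + 2 * card Z"
      "\<forall>r\<in>R. odd (card {i\<in>X. rel i r})" "\<forall>r\<in>R. \<forall>s\<in>R. r \<noteq> s \<longrightarrow> \<not> rel r s"
      "\<forall>z\<in>Z. \<exists>w\<in>X. w \<notin> Z \<and> w \<noteq> z \<and> rel z w"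
  proof -
    have "\<exists>R Z. R \<subseteq> X \<and> Z \<subseteq> X \<and> R \<inter> Z = {} \<and> card X = card R + 2 * card Z \<and>
     (\<forall>r\<in>R. odd (card {i\<in>X. rel i r})) \<and> (\<forall>r\<in>R. \<forall>s\<in>R. r \<noteq> s \<longrightarrow> \<not> rel r s) \<and>
     (\<forall>z\<in>Z. \<exists>w\<in>X. w \<notin> Z \<and> w \<noteq> z \<and> rel z w)"
      by (rule structure_lemma[OF finX]) (fact relR relS relT)+
    then show ?thesis
    apply (elim exE conjE)
    apply (rule that)
    by assumption+
  qed
  have Dsub: "D \<subseteq> {..<n}" by (auto simp: D_def)
  have finD: "finite D" using Dsub finite_subset by blast
  have finZ: "finite Z" using RZ(2) finX finite_subset by blast
  have finR: "finite R" using RZ(1) finX finite_subset by blast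
  have DZ: "D \<inter> Z = {}" using RZ(2) by (auto simp: X_def)
  have cardX: "card X = n - card D" using Dsub by (simp add: X_def card_Diff_subset finD)
  have cnt: "2 ^ card (D \<union> Z) * card A \<le> 2 ^ n"
  proof (rule counting[OF fin sub])
    show "D \<union> Z \<subseteq> {..<n}" using Dsub RZ(2) by (auto simp: X_def)
  next
    fix z assume z: "z \<in> D \<union> Z"
    show "\<exists>U. finite U \<and> U \<inter> (D \<union> Z) = {z} \<and> (\<forall>x\<in>A. \<forall>y\<in>A. (\<Prod>i\<in>U. x i) = (\<Prod>i\<in>U. y i))"
    proof (cases "z \<in> D")
      case True
      then have "\<forall>x\<in>A. \<forall>y\<in>A. x z = y z" unfolding D_def by blast
      then have zc: "x z = y z" if "x \<in> A" "y \<in> A" for x y using that by blast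
      have "\<forall>x\<in>A. \<forall>y\<in>A. (\<Prod>i\<in>{z}. x i) = (\<Prod>i\<in>{z}. y i)"
      proof (intro ballI)
        fix x y assume "x \<in> A" "y \<in> A"
        then show "(\<Prod>i\<in>{z}. x i) = (\<Prod>i\<in>{z}. y i)" using zc[of x y] by simp
      qed
      moreover have "{z} \<inter> (D \<union> Z) = {z}" using True by blast
      moreover have "finite {z}" by simp
      ultimately show ?thesis by blast
    next
      case False
      then have "z \<in> Z" using z by simp
      then obtain w where w: "w \<in> X" "w \<notin> Z" "w \<noteq> z" "rel z w" using RZ(7) by blast
      have "w \<notin> D" using w(1) by (simp add: X_def)
      then have "{z, w} \<inter> (D \<union> Z) = {z}" using w z by auto
      moreover have "\<forall>x\<in>A. \<forall>y\<in>A. (\<Prod>i\<in>{z,w}. x i) = (\<Prod>i\<in>{z,w}. y i)"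
      proof (intro ballI)
        fix x y assume xy: "x \<in> A" "y \<in> A"
        have pz: "x z * x w = y z * y w" using w(4) xy unfolding rel_def by blast
        have "(\<Prod>i\<in>{z,w}. x i) = x z * x w" "(\<Prod>i\<in>{z,w}. y i) = y z * y w"
          using w(3) by simp_all
        then show "(\<Prod>i\<in>{z,w}. x i) = (\<Prod>i\<in>{z,w}. y i)" using pz by simp
      qed
      moreover have "finite {z, w}" by simp
      ultimately show ?thesis by blast
    qed
  qed
  have cA: "card A > 0" using fin ne by (simp add: card_gt_0_iff)
  have "card A * 2 ^ card (D \<union> Z) \<le> card A * 2 ^ m" using order_trans[OF cnt sz] by (simp add: mult.commute)
  then have "(2::nat) ^ card (D \<union> Z) \<le> 2 ^ m" using cA by simp
  then have "card (D \<union> Z) \<le> m" by simp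
  then have DZm: "card D + card Z \<le> m" using DZ finD finZ by (simp add: card_Un_disjoint)
  have cardD: "card D \<le> n" using Dsub card_mono[OF _ Dsub] by simp
  have Rbound: "real (card R) \<ge> real n - 2 * real m"
    using RZ(4) cardX DZm cardD by linarith
  obtain p where p: "p \<in> A" using ne by blast
  define xr where "xr i x = real_of_int (x i)" for i and x :: "nat \<Rightarrow> int"
  have xsq: "xr i x * xr i x = 1" if "x \<in> A" for i x
    using sq[OF that, of i] unfolding xr_def by (metis of_int_1 of_int_mult)
  have Xchar: "i < n \<and> i \<notin> D" if "i \<in> X" for i using that by (simp add: X_def)
  have bal1: "(\<Sum>x\<in>A. xr r x) = 0" if rX: "r \<in> X" for r
  proof -
    obtain y z where yz: "y \<in> A" "z \<in> A" "y r \<noteq> z r" using Xchar[OF rX] by (auto simp: D_def)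
    show ?thesis unfolding xr_def
    proof (rule balanced[OF fin sub tc _ _ yz(1,2)])
      show "real_of_int (tp x y z r) = real_of_int (x r) * real_of_int (y r) * real_of_int (z r)" for x y z
        by (simp add: tp_def)
      show "real_of_int (x r) = 1 \<or> real_of_int (x r) = -1" if "x \<in> A" for x
        using cube_val[of x n r] sub that by auto
      show "real_of_int (y r) \<noteq> real_of_int (z r)" using yz by simp
    qed
  qed
  have bal2: "(\<Sum>x\<in>A. xr i x * xr j x) = 0" if nr: "\<not> rel i j" for i j
  proof -
    obtain y z where yz: "y \<in> A" "z \<in> A" "y i * y j \<noteq> z i * z j" using nr by (auto simp: rel_def)
    have "(\<Sum>x\<in>A. real_of_int (x i * x j)) = 0"
    proof (rule balanced[OF fin sub tc _ _ yz(1,2)])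
      show "real_of_int (tp x y z i * tp x y z j) = real_of_int (x i * x j) * real_of_int (y i * y j) * real_of_int (z i * z j)" for x y z
        by (simp add: tp_def algebra_simps)
      show "real_of_int (x i * x j) = 1 \<or> real_of_int (x i * x j) = -1" if "x \<in> A" for x
      proof -
        have "x i * x j = 1 \<or> x i * x j = -1"
          by (rule pm_mult) (use cube_val sub that in blast)+
        then show ?thesis by (metis of_int_1 of_int_minus)
      qed
      show "real_of_int (y i * y j) \<noteq> real_of_int (z i * z j)" using yz(3) by (simp only: of_int_eq_iff) simp
    qed
    then show ?thesis by (simp add: xr_def)
  qed
  have const2: "(\<Sum>x\<in>A. xr i x * xr j x) = a * real_of_int (p i * p j)" if "rel i j" for i j
  proof -
    have "(\<Sum>x\<in>A. xr i x * xr j x) = (\<Sum>x\<in>A. real_of_int (p i * p j))"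
    proof (rule sum.cong)
      fix x assume "x \<in> A"
      then have "x i * x j = p i * p j" using that p unfolding rel_def by blast
      then show "xr i x * xr j x = real_of_int (p i * p j)" unfolding xr_def by (metis of_int_mult)
    qed simp
    then show ?thesis by (simp add: a_def)
  qed
  have O2: "(\<Sum>x\<in>A. xr r x * xr s x) = (if r = s then a else 0)" if "r \<in> R" "s \<in> R" for r s
  proof (cases "r = s")
    case True
    have e: "real_of_int (p r) * real_of_int (p r) = 1" using sq[OF p, of r] by (metis of_int_1 of_int_mult)
    then show ?thesis using const2[OF relR[of r]] True by simp
  next
    case False
    then show ?thesis using bal2 RZ(6) that by simp
  qed
  have O3: "a \<le> \<bar>\<Sum>x\<in>A. Lf n x * xr r x\<bar>" if rR: "r \<in> R" for r
  proof -
    have Keq: "{i\<in>{..<n}. rel i r} = {i\<in>X. rel i r}"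
    proof -
      have "i \<notin> D" if "i < n" "rel i r" for i
      proof
        assume iD: "i \<in> D"
        have "x r = y r" if "x \<in> A" "y \<in> A" for x y
        proof -
          have "x i = y i" using iD that by (simp add: D_def)
          moreover have "x i * x r = y i * y r" using \<open>rel i r\<close> that unfolding rel_def by blast
          moreover have "x r = x i * (x i * x r)" "y r = y i * (y i * y r)"
            using sq that by (simp_all add: mult.assoc[symmetric])
          ultimately show ?thesis by metis
        qed
        then have "r \<in> D" using rR RZ(1) Xchar by (auto simp: D_def)
        then show False using rR RZ(1) Xchar by auto
      qed
      then show ?thesis by (auto simp: X_def)
    qed
    have "(\<Sum>x\<in>A. Lf n x * xr r x) = (\<Sum>x\<in>A. \<Sum>i<n. xr i x * xr r x)"
      by (simp add: Lf_def xr_def sum_distrib_right)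
    also have "\<dots> = (\<Sum>i<n. \<Sum>x\<in>A. xr i x * xr r x)" by (rule sum.swap)
    also have "\<dots> = (\<Sum>i<n. if rel i r then a * real_of_int (p i * p r) else 0)"
      by (rule sum.cong) (auto simp: const2 bal2)
    also have "\<dots> = (\<Sum>i\<in>{i\<in>{..<n}. rel i r}. a * real_of_int (p i * p r))"
      by (rule sum.inter_filter[symmetric]) simp
    also have "\<dots> = (\<Sum>i\<in>{i\<in>X. rel i r}. a * real_of_int (p i * p r))" using Keq by simp
    also have "\<dots> = a * real_of_int (\<Sum>i\<in>{i\<in>X. rel i r}. p i * p r)"
      by (simp add: sum_distrib_left)
    finally have eq: "(\<Sum>x\<in>A. Lf n x * xr r x) = a * real_of_int (\<Sum>i\<in>{i\<in>X. rel i r}. p i * p r)" .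
    have "1 \<le> \<bar>\<Sum>i\<in>{i\<in>X. rel i r}. p i * p r\<bar>"
    proof (rule oddsum2)
      show "finite {i\<in>X. rel i r}" using finX by simp
      show "odd (card {i\<in>X. rel i r})" using RZ(5) rR by blast
      show "\<forall>i\<in>{i\<in>X. rel i r}. p i * p r = 1 \<or> p i * p r = -1"
      proof
        fix i assume "i \<in> {i\<in>X. rel i r}"
        show "p i * p r = 1 \<or> p i * p r = -1"
          by (rule pm_mult) (use cube_val sub p in blast)+
      qed
    qed
    then have "1 \<le> \<bar>real_of_int (\<Sum>i\<in>{i\<in>X. rel i r}. p i * p r)\<bar>" by linarith
    then have "a * 1 \<le> a * \<bar>real_of_int (\<Sum>i\<in>{i\<in>X. rel i r}. p i * p r)\<bar>"
      using apos by (intro mult_left_mono) auto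
    then show ?thesis using eq apos by (simp add: abs_mult)
  qed
  text \<open>Bessel inequality\<close>
  define SL where "SL = (\<Sum>x\<in>A. Lf n x)"
  define \<mu> where "\<mu> = SL / a"
  define b where "b r = (\<Sum>x\<in>A. Lf n x * xr r x) / a" for r
  define h where "h x = Lf n x - \<mu> - (\<Sum>r\<in>R. b r * xr r x)" for x
  have Lb: "(\<Sum>x\<in>A. Lf n x * xr r x) = a * b r" for r using apos by (simp add: b_def)
  have swapR: "(\<Sum>x\<in>A. (\<Sum>r\<in>R. b r * xr r x) * g x) = (\<Sum>r\<in>R. b r * (\<Sum>x\<in>A. xr r x * g x))" for g
  proof -
    have "(\<Sum>x\<in>A. (\<Sum>r\<in>R. b r * xr r x) * g x) = (\<Sum>x\<in>A. \<Sum>r\<in>R. b r * (xr r x * g x))"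
      by (simp add: sum_distrib_right mult.assoc)
    also have "\<dots> = (\<Sum>r\<in>R. \<Sum>x\<in>A. b r * (xr r x * g x))" by (rule sum.swap)
    also have "\<dots> = (\<Sum>r\<in>R. b r * (\<Sum>x\<in>A. xr r x * g x))" by (simp add: sum_distrib_left)
    finally show ?thesis .
  qed
  have E1: "(\<Sum>x\<in>A. h x * xr s x) = 0" if sR: "s \<in> R" for s
  proof -
    have "(\<Sum>x\<in>A. h x * xr s x) = (\<Sum>x\<in>A. Lf n x * xr s x) - \<mu> * (\<Sum>x\<in>A. xr s x)
         - (\<Sum>x\<in>A. (\<Sum>r\<in>R. b r * xr r x) * xr s x)"
      by (simp add: h_def left_diff_distrib sum_subtractf sum_distrib_left)
    also have "(\<Sum>x\<in>A. (\<Sum>r\<in>R. b r * xr r x) * xr s x) = (\<Sum>r\<in>R. b r * (if r = s then a else 0))"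
      using swapR O2 sR by simp
    also have "\<dots> = b s * a" using finR sR by (simp add: if_distrib[of "\<lambda>t. b _ * t"] sum.delta cong: if_cong)
    finally show ?thesis using bal1 sR RZ(1) Lb by auto
  qed
  have E0: "(\<Sum>x\<in>A. h x) = 0"
  proof -
    have "(\<Sum>x\<in>A. h x) = SL - a * \<mu> - (\<Sum>x\<in>A. (\<Sum>r\<in>R. b r * xr r x) * 1)"
      by (simp add: h_def sum_subtractf SL_def a_def)
    also have "(\<Sum>x\<in>A. (\<Sum>r\<in>R. b r * xr r x) * 1) = 0"
    proof -
      have "\<forall>r\<in>R. b r * (\<Sum>x\<in>A. xr r x * 1) = 0" using bal1 RZ(1) by auto
      then have "(\<Sum>r\<in>R. b r * (\<Sum>x\<in>A. xr r x * 1)) = 0" by (intro sum.neutral) blast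
      then show ?thesis using swapR[of "\<lambda>_. 1"] by (simp only:)
    qed
    finally show ?thesis using apos by (simp add: \<mu>_def)
  qed
  have Ldecomp: "Lf n x = h x + \<mu> + (\<Sum>r\<in>R. b r * xr r x)" for x by (simp add: h_def)
  have hh: "(\<Sum>x\<in>A. h x * Lf n x) = (\<Sum>x\<in>A. (h x)^2)"
  proof -
    have "(\<Sum>x\<in>A. h x * Lf n x) = (\<Sum>x\<in>A. (h x)^2) + \<mu> * (\<Sum>x\<in>A. h x) + (\<Sum>x\<in>A. (\<Sum>r\<in>R. b r * xr r x) * h x)"
      by (simp add: Ldecomp distrib_left sum.distrib sum_distrib_left power2_eq_square mult.commute)
    also have "(\<Sum>x\<in>A. (\<Sum>r\<in>R. b r * xr r x) * h x) = 0"
      using swapR[of h] E1 by (simp add: mult.commute)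
    finally show ?thesis using E0 by simp
  qed
  have LL: "(\<Sum>x\<in>A. (Lf n x)^2) = (\<Sum>x\<in>A. (h x)^2) + \<mu> * SL + a * (\<Sum>r\<in>R. (b r)^2)"
  proof -
    have "(\<Sum>x\<in>A. (Lf n x)^2) = (\<Sum>x\<in>A. h x * Lf n x) + \<mu> * SL + (\<Sum>x\<in>A. (\<Sum>r\<in>R. b r * xr r x) * Lf n x)"
    proof -
      have pw: "(Lf n x)^2 = h x * Lf n x + \<mu> * Lf n x + (\<Sum>r\<in>R. b r * xr r x) * Lf n x" for x
        by (simp add: h_def algebra_simps power2_eq_square)
      show ?thesis by (simp only: pw sum.distrib sum_distrib_left[symmetric] SL_def)
    qed
    also have "(\<Sum>x\<in>A. (\<Sum>r\<in>R. b r * xr r x) * Lf n x) = a * (\<Sum>r\<in>R. (b r)^2)"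
      using swapR[of "Lf n"] Lb by (simp add: mult.commute sum_distrib_left power2_eq_square mult.left_commute)
    finally show ?thesis using hh by simp
  qed
  have br: "(b r)^2 \<ge> 1" if "r \<in> R" for r
  proof -
    have "a \<le> \<bar>a * b r\<bar>" using O3[OF that] Lb by simp
    then have "1 \<le> \<bar>b r\<bar>" using apos by (simp add: abs_mult)
    then have "1 \<le> \<bar>b r\<bar>^2" by (rule one_le_power)
    then show ?thesis by simp
  qed
  have "(\<Sum>r\<in>R. (b r)^2) \<ge> (\<Sum>r\<in>R. 1)" using br by (intro sum_mono) auto
  then have sb: "(\<Sum>r\<in>R. (b r)^2) \<ge> real (card R)" by simp
  have h2: "(\<Sum>x\<in>A. (h x)^2) \<ge> 0" by (intro sum_nonneg) auto
  have "a * (\<Sum>x\<in>A. (Lf n x)^2) \<ge> a * (\<mu> * SL) + a * (a * real (card R))"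
  proof -
    have "(\<Sum>x\<in>A. (Lf n x)^2) \<ge> \<mu> * SL + a * real (card R)"
    proof -
      have "a * (\<Sum>r\<in>R. (b r)^2) \<ge> a * real (card R)" using sb apos by (intro mult_left_mono) auto
      then show ?thesis using LL h2 by linarith
    qed
    then have "a * (\<mu> * SL + a * real (card R)) \<le> a * (\<Sum>x\<in>A. (Lf n x)^2)"
      using apos by (intro mult_left_mono) auto
    then show ?thesis by (simp add: distrib_left)
  qed
  moreover have "a * (\<mu> * SL) = SL^2" using apos by (simp add: \<mu>_def power2_eq_square)
  moreover have "a * (a * real (card R)) \<ge> a^2 * (real n - 2 * real m)"
    using Rbound apos by (simp add: power2_eq_square mult_left_mono)
  ultimately show ?thesis by (simp add: a_def SL_def)
qed



definition chi :: "nat set \<Rightarrow> (nat \<Rightarrow> int) \<Rightarrow> int" where "chi S x = (\<Prod>i\<in>S. x i)"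

lemma chi_pm': "x \<in> cube n \<Longrightarrow> chi S x = 1 \<or> chi S x = -1"
  unfolding chi_def by (rule chi_pm)

lemma chi_tp: "chi S (tp x y z) = chi S x * chi S y * chi S z"
  unfolding chi_def tp_def by (simp add: prod.distrib)

lemma halving:
  assumes fin: "finite A" and sub: "A \<subseteq> cube n" and tc: "tclosed A"
  shows "{x\<in>A. chi S x = -1} = {} \<or> {x\<in>A. chi S x \<noteq> -1} = {} \<or>
         card {x\<in>A. chi S x = -1} = card {x\<in>A. chi S x \<noteq> -1}"
proof (rule ccontr)
  define A1 where "A1 = {x\<in>A. chi S x = -1}"
  define A2 where "A2 = {x\<in>A. chi S x \<noteq> -1}"
  assume H: "\<not> ?thesis"
  then obtain y z where y: "y \<in> A" "chi S y = -1" and z: "z \<in> A" "chi S z \<noteq> -1" by blast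
  have z1: "chi S z = 1" using z chi_pm'[of z n S] sub by auto
  have bal: "(\<Sum>x\<in>A. real_of_int (chi S x)) = 0"
  proof (rule balanced[OF fin sub tc _ _ y(1) z(1)])
    show "real_of_int (chi S (tp x y z)) = real_of_int (chi S x) * real_of_int (chi S y) * real_of_int (chi S z)" for x y z
      by (simp add: chi_tp)
    show "real_of_int (chi S x) = 1 \<or> real_of_int (chi S x) = -1" if "x \<in> A" for x
      using chi_pm'[of x n S] sub that by auto
    show "real_of_int (chi S y) \<noteq> real_of_int (chi S z)" using y z1 by simp
  qed
  have AU: "A = A1 \<union> A2" by (auto simp: A1_def A2_def)
  have "(\<Sum>x\<in>A. real_of_int (chi S x)) = (\<Sum>x\<in>A1. real_of_int (chi S x)) + (\<Sum>x\<in>A2. real_of_int (chi S x))"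
    unfolding AU by (rule sum.union_disjoint) (use fin in \<open>auto simp: A1_def A2_def\<close>)
  also have "(\<Sum>x\<in>A1. real_of_int (chi S x)) = (\<Sum>x\<in>A1. -1)" by (rule sum.cong) (auto simp: A1_def)
  also have "(\<Sum>x\<in>A2. real_of_int (chi S x)) = (\<Sum>x\<in>A2. 1)"
  proof (rule sum.cong)
    fix x assume "x \<in> A2"
    then show "real_of_int (chi S x) = 1" using chi_pm'[of x n S] sub by (auto simp: A2_def)
  qed simp
  finally have "real (card A2) = real (card A1)" using bal by simp
  then have "card A1 = card A2" by simp
  then show False using H by (simp add: A1_def A2_def)
qed

lemma cs2:
  fixes a1 b1 a2 b2 :: real
  assumes "0\<le>a1" "0\<le>b1" "0\<le>a2" "0\<le>b2"
  shows "sqrt (a1*b1) + sqrt (a2*b2) \<le> sqrt ((a1+a2)*(b1+b2))"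
proof -
  define p q r t where "p = sqrt a1" and "q = sqrt b1" and "r = sqrt a2" and "t = sqrt b2"
  have a: "a1 = p^2" "b1 = q^2" "a2 = r^2" "b2 = t^2" using assms by (simp_all add: p_def q_def r_def t_def)
  have s: "sqrt (a1*b1) = p*q" "sqrt (a2*b2) = r*t" by (simp_all add: p_def q_def r_def t_def real_sqrt_mult)
  have id: "(p^2+r^2)*(q^2+t^2) = (p*q+r*t)^2 + (p*t - r*q)^2"
    by (simp add: power2_eq_square algebra_simps)
  have "(p*q+r*t)^2 \<le> (a1+a2)*(b1+b2)" using id a by simp
  then show ?thesis using s by (simp add: real_le_rsqrt)
qed

definition Bf :: "nat \<Rightarrow> (nat \<Rightarrow> int) set \<Rightarrow> nat \<Rightarrow> real" where
  "Bf n A j = (\<Sum>x\<in>A. (Lf n x)^2) - real (card A) * (real n - 2 * real j)"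

lemma Bf_mono: "j \<le> k \<Longrightarrow> Bf n A j \<le> Bf n A k"
  unfolding Bf_def by (intro diff_left_mono mult_left_mono) auto

lemma tree_lemma:
  "pdt_wf n T \<Longrightarrow> finite A \<Longrightarrow> A \<subseteq> cube n \<Longrightarrow> tclosed A \<Longrightarrow> (A = {} \<or> 2^n \<le> card A * 2^m) \<Longrightarrow>
   0 \<le> Bf n A (m + pdt_depth T) \<and>
   (\<Sum>x\<in>A. real_of_int (pdt_eval T x) * Lf n x) \<le> sqrt (real (card A) * Bf n A (m + pdt_depth T))"
proof (induction T arbitrary: A m)
  case (PLeaf b)
  show ?case
  proof (cases "A = {}")
    case True
    then show ?thesis by (simp add: Bf_def)
  next
    case False
    then have sz: "2^n \<le> card A * 2^m" using PLeaf by blast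
    have K: "(\<Sum>x\<in>A. Lf n x)^2 \<le> real (card A) * Bf n A m"
      using key[OF PLeaf(2) False PLeaf(3) PLeaf(4) sz] by (simp add: Bf_def algebra_simps power2_eq_square)
    have apos: "real (card A) > 0" using False PLeaf(2) by (simp add: card_gt_0_iff)
    have B0: "0 \<le> Bf n A m"
    proof -
      have "0 \<le> real (card A) * Bf n A m" using K by (smt (verit) zero_le_power2)
      then show ?thesis using apos by (simp add: zero_le_mult_iff)
    qed
    have bpm: "b = 1 \<or> b = -1" using PLeaf(1) by auto
    have "(\<Sum>x\<in>A. real_of_int (pdt_eval (PLeaf b) x) * Lf n x) = real_of_int b * (\<Sum>x\<in>A. Lf n x)"
      by (simp add: sum_distrib_left)
    also have "\<dots> \<le> \<bar>\<Sum>x\<in>A. Lf n x\<bar>" using bpm by auto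
    also have "\<dots> = sqrt ((\<Sum>x\<in>A. Lf n x)^2)" by simp
    also have "\<dots> \<le> sqrt (real (card A) * Bf n A m)" using K by (rule real_sqrt_le_mono)
    finally show ?thesis using B0 by simp
  qed
next
  case (PNode S t1 t2)
  define A1 where "A1 = {x\<in>A. chi S x = -1}"
  define A2 where "A2 = {x\<in>A. chi S x \<noteq> -1}"
  define j where "j = m + pdt_depth (PNode S t1 t2)"
  have fin: "finite A" and sub: "A \<subseteq> cube n" and tc: "tclosed A" using PNode by auto
  have wf: "pdt_wf n t1" "pdt_wf n t2" using PNode(3) by auto
  have fin12: "finite A1" "finite A2" using fin by (simp_all add: A1_def A2_def)
  have sub12: "A1 \<subseteq> cube n" "A2 \<subseteq> cube n" using sub by (auto simp: A1_def A2_def)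
  have tc1: "tclosed A1"
    unfolding tclosed_def
  proof (intro ballI)
    fix x y z assume "x \<in> A1" "y \<in> A1" "z \<in> A1"
    then show "tp x y z \<in> A1" using tc by (auto simp: A1_def tclosed_def chi_tp)
  qed
  have tc2: "tclosed A2"
    unfolding tclosed_def
  proof (intro ballI)
    fix x y z assume xyz: "x \<in> A2" "y \<in> A2" "z \<in> A2"
    have one: "chi S w = 1" if "w \<in> A2" for w using that chi_pm'[of w n S] sub by (auto simp: A2_def)
    show "tp x y z \<in> A2" using tc xyz one[OF xyz(1)] one[OF xyz(2)] one[OF xyz(3)]
      by (auto simp: A2_def tclosed_def chi_tp)
  qed
  have AU: "A = A1 \<union> A2" and disj: "A1 \<inter> A2 = {}" by (auto simp: A1_def A2_def)
  have cardA: "card A = card A1 + card A2" using fin12 disj AU by (simp add: card_Un_disjoint)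
  have hv: "A1 = {} \<or> A2 = {} \<or> card A1 = card A2"
    using halving[OF fin sub tc, of S] by (simp add: A1_def A2_def)
  have size: "Ai = {} \<or> 2^n \<le> card Ai * 2^(m+1)" if "Ai = A1 \<or> Ai = A2" for Ai
  proof (cases "Ai = {}")
    case False
    have szA: "2^n \<le> card A * 2^m" using PNode(7) False that AU by auto
    have "card A \<le> card Ai * 2"
    proof -
      consider "A1 = {}" | "A2 = {}" | "card A1 = card A2" using hv by blast
      then show ?thesis using that cardA False by cases auto
    qed
    then have "card A * 2^m \<le> card Ai * 2 * 2^m" by simp
    then have "2^n \<le> card Ai * 2 * 2^m" using szA by linarith
    then show ?thesis by (simp add: mult.assoc)
  qed simp
  have IH1: "0 \<le> Bf n A1 (m + 1 + pdt_depth t1) \<and>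
     (\<Sum>x\<in>A1. real_of_int (pdt_eval t1 x) * Lf n x) \<le> sqrt (real (card A1) * Bf n A1 (m + 1 + pdt_depth t1))"
    using PNode.IH(1)[OF wf(1) fin12(1) sub12(1) tc1 size[of A1]] by simp
  have IH2: "0 \<le> Bf n A2 (m + 1 + pdt_depth t2) \<and>
     (\<Sum>x\<in>A2. real_of_int (pdt_eval t2 x) * Lf n x) \<le> sqrt (real (card A2) * Bf n A2 (m + 1 + pdt_depth t2))"
    using PNode.IH(2)[OF wf(2) fin12(2) sub12(2) tc2 size[of A2]] by simp
  have j1: "m + 1 + pdt_depth t1 \<le> j" "m + 1 + pdt_depth t2 \<le> j" by (simp_all add: j_def)
  have B1: "0 \<le> Bf n A1 j" "Bf n A1 (m + 1 + pdt_depth t1) \<le> Bf n A1 j"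
    using IH1 Bf_mono[OF j1(1), of n A1] by auto
  have B2: "0 \<le> Bf n A2 j" "Bf n A2 (m + 1 + pdt_depth t2) \<le> Bf n A2 j"
    using IH2 Bf_mono[OF j1(2), of n A2] by auto
  have s1: "(\<Sum>x\<in>A1. real_of_int (pdt_eval t1 x) * Lf n x) \<le> sqrt (real (card A1) * Bf n A1 j)"
    using IH1 B1 by (meson mult_left_mono of_nat_0_le_iff order_trans real_sqrt_le_mono)
  have s2: "(\<Sum>x\<in>A2. real_of_int (pdt_eval t2 x) * Lf n x) \<le> sqrt (real (card A2) * Bf n A2 j)"
    using IH2 B2 by (meson mult_left_mono of_nat_0_le_iff order_trans real_sqrt_le_mono)
  have Bsplit: "Bf n A j = Bf n A1 j + Bf n A2 j"
  proof -
    have "(\<Sum>x\<in>A. (Lf n x)^2) = (\<Sum>x\<in>A1. (Lf n x)^2) + (\<Sum>x\<in>A2. (Lf n x)^2)"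
      unfolding AU by (rule sum.union_disjoint[OF fin12 disj])
    then show ?thesis unfolding Bf_def using cardA by (simp add: algebra_simps)
  qed
  have ssplit: "(\<Sum>x\<in>A. real_of_int (pdt_eval (PNode S t1 t2) x) * Lf n x) =
     (\<Sum>x\<in>A1. real_of_int (pdt_eval t1 x) * Lf n x) + (\<Sum>x\<in>A2. real_of_int (pdt_eval t2 x) * Lf n x)"
  proof -
    have "(\<Sum>x\<in>A. real_of_int (pdt_eval (PNode S t1 t2) x) * Lf n x) =
      (\<Sum>x\<in>A1. real_of_int (pdt_eval (PNode S t1 t2) x) * Lf n x) + (\<Sum>x\<in>A2. real_of_int (pdt_eval (PNode S t1 t2) x) * Lf n x)"
      unfolding AU by (rule sum.union_disjoint[OF fin12 disj])
    also have "(\<Sum>x\<in>A1. real_of_int (pdt_eval (PNode S t1 t2) x) * Lf n x) = (\<Sum>x\<in>A1. real_of_int (pdt_eval t1 x) * Lf n x)"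
      by (rule sum.cong) (auto simp: A1_def chi_def)
    also have "(\<Sum>x\<in>A2. real_of_int (pdt_eval (PNode S t1 t2) x) * Lf n x) = (\<Sum>x\<in>A2. real_of_int (pdt_eval t2 x) * Lf n x)"
      by (rule sum.cong) (auto simp: A2_def chi_def)
    finally show ?thesis .
  qed
  have "sqrt (real (card A1) * Bf n A1 j) + sqrt (real (card A2) * Bf n A2 j)
        \<le> sqrt ((real (card A1) + real (card A2)) * (Bf n A1 j + Bf n A2 j))"
    using B1(1) B2(1) by (intro cs2) auto
  then have "(\<Sum>x\<in>A. real_of_int (pdt_eval (PNode S t1 t2) x) * Lf n x) \<le> sqrt (real (card A) * Bf n A j)"
    using s1 s2 ssplit Bsplit cardA by simp
  moreover have "0 \<le> Bf n A j" using Bsplit B1 B2 by simp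
  ultimately show ?case by (simp add: j_def)
qed



lemma sumsq: "(\<Sum>x\<in>cube n. (Lf n x)^2) = 2^n * real n"
proof -
  have pair: "(\<Sum>x\<in>cube n. real_of_int (x i) * real_of_int (x j)) = (if i = j then 2^n else 0)"
    if "i < n" "j < n" for i j
  proof (cases "i = j")
    case True
    have "(\<Sum>x\<in>cube n. real_of_int (x i) * real_of_int (x j)) = (\<Sum>x\<in>cube n. 1)"
    proof (rule sum.cong)
      fix x assume "x \<in> cube n"
      then have "x i * x i = 1" by (rule cube_sq)
      then show "real_of_int (x i) * real_of_int (x j) = 1" using True by (metis of_int_1 of_int_mult)
    qed simp
    then show ?thesis using True by (simp add: card_cube)
  next
    case False
    define y :: "nat \<Rightarrow> int" where "y = (\<lambda>_. 1)"
    define z :: "nat \<Rightarrow> int" where "z = (\<lambda>k. if k = i then -1 else 1)"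
    have yc: "y \<in> cube n" by (simp add: y_def cube_def)
    have zc: "z \<in> cube n" using that by (auto simp: z_def cube_def)
    have "(\<Sum>x\<in>cube n. real_of_int (x i * x j)) = 0"
    proof (rule balanced[OF finite_cube subset_refl cube_tclosed _ _ yc zc])
      show "real_of_int (tp x y z i * tp x y z j) = real_of_int (x i * x j) * real_of_int (y i * y j) * real_of_int (z i * z j)" for x y z
        by (simp add: tp_def algebra_simps)
      show "real_of_int (x i * x j) = 1 \<or> real_of_int (x i * x j) = -1" if "x \<in> cube n" for x
      proof -
        have "x i * x j = 1 \<or> x i * x j = -1"
          by (rule pm_mult) (use cube_val that in blast)+
        then show ?thesis by (metis of_int_1 of_int_minus)
      qed
      show "real_of_int (y i * y j) \<noteq> real_of_int (z i * z j)" using False by (simp add: y_def z_def)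
    qed
    then show ?thesis using False by simp
  qed
  have "(\<Sum>x\<in>cube n. (Lf n x)^2) = (\<Sum>x\<in>cube n. \<Sum>i<n. \<Sum>j<n. real_of_int (x i) * real_of_int (x j))"
    by (simp add: Lf_def power2_eq_square sum_product)
  also have "\<dots> = (\<Sum>i<n. \<Sum>x\<in>cube n. \<Sum>j<n. real_of_int (x i) * real_of_int (x j))"
    by (rule sum.swap)
  also have "\<dots> = (\<Sum>i<n. \<Sum>j<n. \<Sum>x\<in>cube n. real_of_int (x i) * real_of_int (x j))"
    by (rule sum.cong[OF refl], rule sum.swap)
  also have "\<dots> = (\<Sum>i<n. \<Sum>j<n. if i = j then 2^n else 0)"
    by (rule sum.cong, simp, rule sum.cong, simp) (simp add: pair)
  also have "\<dots> = (\<Sum>i<n. 2^n)" by simp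
  finally show ?thesis by simp
qed

theorem theorem3:
  fixes n d :: nat and f :: "(nat \<Rightarrow> int) \<Rightarrow> int" and T :: pdt
  assumes "\<forall>x\<in>cube n. f x \<in> {-1, 1}"
    and "pdt_wf n T"
    and "pdt_computes n T f"
    and "pdt_depth T = d"
  shows "(\<Sum>i<n. fourier1 n f i) \<le> sqrt (2 * real d)"
proof -
  have "(\<Sum>i<n. fourier1 n f i) = (\<Sum>x\<in>cube n. real_of_int (f x) * Lf n x) / 2^n"
  proof -
    have "(\<Sum>i<n. fourier1 n f i) = (\<Sum>i<n. \<Sum>x\<in>cube n. real_of_int (f x) * real_of_int (x i)) / 2^n"
      by (simp add: fourier1_def sum_divide_distrib)
    also have "(\<Sum>i<n. \<Sum>x\<in>cube n. real_of_int (f x) * real_of_int (x i)) = (\<Sum>x\<in>cube n. real_of_int (f x) * Lf n x)"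
    proof -
      have "(\<Sum>i<n. \<Sum>x\<in>cube n. real_of_int (f x) * real_of_int (x i)) = (\<Sum>x\<in>cube n. \<Sum>i<n. real_of_int (f x) * real_of_int (x i))"
        by (rule sum.swap)
      then show ?thesis by (simp add: Lf_def sum_distrib_left)
    qed
    finally show ?thesis .
  qed
  also have "(\<Sum>x\<in>cube n. real_of_int (f x) * Lf n x) = (\<Sum>x\<in>cube n. real_of_int (pdt_eval T x) * Lf n x)"
    using assms(3) by (simp add: pdt_computes_def)
  finally have eq: "(\<Sum>i<n. fourier1 n f i) = (\<Sum>x\<in>cube n. real_of_int (pdt_eval T x) * Lf n x) / 2^n" .
  have tl: "(\<Sum>x\<in>cube n. real_of_int (pdt_eval T x) * Lf n x) \<le> sqrt (real (card (cube n)) * Bf n (cube n) (0 + pdt_depth T))"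
    using tree_lemma[OF assms(2) finite_cube subset_refl cube_tclosed, of 0] by (simp add: card_cube)
  have Beq: "Bf n (cube n) (0 + pdt_depth T) = 2^n * (2 * real d)"
    using assms(4) by (simp add: Bf_def sumsq card_cube algebra_simps)
  have "real (card (cube n)) * Bf n (cube n) (0 + pdt_depth T) = (2^n)^2 * (2 * real d)"
    unfolding Beq by (simp add: card_cube power2_eq_square)
  moreover have "sqrt (((2::real)^n)^2 * (2 * real d)) = 2^n * sqrt (2 * real d)"
    by (simp only: real_sqrt_mult real_sqrt_abs) simp
  ultimately have "sqrt (real (card (cube n)) * Bf n (cube n) (0 + pdt_depth T)) = 2^n * sqrt (2 * real d)"
    by simp
  then have "(\<Sum>x\<in>cube n. real_of_int (pdt_eval T x) * Lf n x) \<le> 2^n * sqrt (2 * real d)" using tl by simp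
  then show ?thesis unfolding eq by (simp add: divide_le_eq mult.commute)
qed


end
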